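(* A family of structures $\mathfrak{K}$ is $\mathbf{nUs}$-learnable if and only if $\mathfrak{K}$ is a solid $\Sigma^{\mathrm{inf}}_1$-partial order.
   Context: All structures are countable, have domain $\mathbb{N}$, are in a finite relational signature, and are identified with their atomic diagrams. A family of structures $\mathfrak{K}$ is a countable set of pairwise nonisomorphic such structures. $\mathcal{S}\restriction_s$ is the finite substructure of $\mathcal{S}$ on $\{0,\dots,s\}$. $\mathrm{LD}(\mathfrak{K})$ is the set of structures with domain $\mathbb{N}$ isomorphic to a member of $\mathfrak{K}$. The hypothesis space is $\{\ulcorner\mathcal{A}\urcorner:\mathcal{A}\in\mathfrak{K}\}\cup\{?\}$; a learner is an arbitrary function $\mathbf{M}$ from $\{\mathcal{S}\restriction_s:\mathcal{S}\in\mathrm{LD}(\mathfrak{K}),s\in\mathbb{N}\}$ to the hypothesis space. $\mathbf{M}$ $\mathbf{nUs}$-learns $\mathfrak{K}$ if for every $\mathcal{S}\in\mathrm{LD}(\mathfrak{K})$ with $\mathcal{S}\cong\mathcal{A}\in\mathfrak{K}$, $\mathbf{M}(\mathcal{S}\restriction_n)$ is eventually constantly $\ulcorner\mathcal{A}\urcorner$, and moreover if $n_0$ is least with $\mathbf{M}(\mathcal{S}\restriction_{n_0})=\ulcorner\mathcal{A}\urcorner$ then $\mathbf{M}(\mathcal{S}\restriction_m)=\ulcorner\mathcal{A}\urcorner$ for all $m>n_0$; $\mathfrak{K}$ is $\mathbf{nUs}$-learnable if some learner $\mathbf{nUs}$-learns it. $\mathrm{Th}_{\Sigma^{\mathrm{inf}}_1}(\mathcal{A})$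 is the set of $\Sigma^{\mathrm{inf}}_1$ sentences of $\mathcal{L}_{\omega_1\omega}$ true in $\mathcal{A}$ (a $\Sigma^{\mathrm{inf}}_1$ formula is a countable disjunction $\bigvee_i\exists\bar y_i\,\psi_i$ with each $\psi_i$ finitary quantifier-free). $\mathfrak{K}$ is a $\Sigma^{\mathrm{inf}}_1$-partial order if distinct members have distinct $\Sigma^{\mathrm{inf}}_1$-theories. $\mathfrak{K}$ is a solid $\Sigma^{\mathrm{inf}}_1$-partial order if it is a $\Sigma^{\mathrm{inf}}_1$-partial order and for every (nonempty) $\mathcal{A}\in\mathfrak{K}$, $\mathrm{Th}_{\Sigma^{\mathrm{inf}}_1}(\mathcal{A})\setminus\bigcup\{\mathrm{Th}_{\Sigma^{\mathrm{inf}}_1}(\mathcal{B}):\mathcal{B}\in\mathfrak{K},\ \mathrm{Th}_{\Sigma^{\mathrm{inf}}_1}(\mathcal{B})\subsetneq\mathrm{Th}_{\Sigma^{\mathrm{inf}}_1}(\mathcal{A})\}\neq\emptyset$. *)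

theory Defs
  imports Main "HOL-Library.Countable_Set"
begin

text \<open>A finite relational signature is a list of arities: relation symbol i (i < length sig)
  has arity sig ! i.  A structure with domain the naturals is identified with its atomic
  diagram, i.e. a predicate R with R i xs meaning that relation i holds of the tuple xs.\<close>

type_synonym struc = "nat \<Rightarrow> nat list \<Rightarrow> bool"

definition wf_struc :: "nat list \<Rightarrow> struc \<Rightarrow> bool" where
  "wf_struc sig S \<longleftrightarrow> (\<forall>i xs. S i xs \<longrightarrow> i < length sig \<and> length xs = sig ! i)"

definition iso :: "struc \<Rightarrow> struc \<Rightarrow> bool" where
  "iso S T \<longleftrightarrow> (\<exists>f. bij f \<and> (\<forall>i xs. S i xs \<longleftrightarrow> T i (map f xs)))"

definition family :: "nat list \<Rightarrow> struc set \<Rightarrow> bool" where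
  "family sig K \<longleftrightarrow> countable K \<and> (\<forall>A\<in>K. wf_struc sig A)
     \<and> (\<forall>A\<in>K. \<forall>B\<in>K. iso A B \<longrightarrow> A = B)"

definition LD :: "nat list \<Rightarrow> struc set \<Rightarrow> struc set" where
  "LD sig K = {S. wf_struc sig S \<and> (\<exists>A\<in>K. iso S A)}"

text \<open>The finite substructure on {0,...,s}, represented as (s, its atomic diagram).\<close>
definition restr :: "struc \<Rightarrow> nat \<Rightarrow> nat \<times> struc" where
  "restr S s = (s, \<lambda>i xs. S i xs \<and> set xs \<subseteq> {..s})"

text \<open>Learners: the hypothesis \<open>\<ulcorner>A\<urcorner>\<close> is represented by Some A, and ? by None.\<close>
type_synonym learner = "nat \<times> struc \<Rightarrow> struc option"

definition nUs_learns :: "nat list \<Rightarrow> struc set \<Rightarrow> learner \<Rightarrow> bool" where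
  "nUs_learns sig K M \<longleftrightarrow>
     (\<forall>S\<in>LD sig K. \<forall>s. M (restr S s) = None \<or> (\<exists>A\<in>K. M (restr S s) = Some A)) \<and>
     (\<forall>S\<in>LD sig K. \<forall>A\<in>K. iso S A \<longrightarrow>
        (\<exists>n0. \<forall>n\<ge>n0. M (restr S n) = Some A) \<and>
        (\<forall>n0. M (restr S n0) = Some A \<and> (\<forall>k<n0. M (restr S k) \<noteq> Some A)
              \<longrightarrow> (\<forall>m>n0. M (restr S m) = Some A)))"

definition nUs_learnable :: "nat list \<Rightarrow> struc set \<Rightarrow> bool" where
  "nUs_learnable sig K \<longleftrightarrow> (\<exists>M. nUs_learns sig K M)"

datatype qf = Eq nat nat | Rel nat "nat list" | Neg qf | Conj qf qf

fun wf_qf :: "nat list \<Rightarrow> qf \<Rightarrow> bool" where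
  "wf_qf sig (Eq a b) = True"
| "wf_qf sig (Rel i xs) = (i < length sig \<and> length xs = sig ! i)"
| "wf_qf sig (Neg p) = wf_qf sig p"
| "wf_qf sig (Conj p q) = (wf_qf sig p \<and> wf_qf sig q)"

fun sat :: "struc \<Rightarrow> (nat \<Rightarrow> nat) \<Rightarrow> qf \<Rightarrow> bool" where
  "sat S v (Eq a b) = (v a = v b)"
| "sat S v (Rel i xs) = S i (map v xs)"
| "sat S v (Neg p) = (\<not> sat S v p)"
| "sat S v (Conj p q) = (sat S v p \<and> sat S v q)"

text \<open>A \<open>\<Sigma>\<^sup>i\<^sup>n\<^sup>f\<^sub>1\<close> sentence \<open>\<Or>\<^sub>i \<exists>y\<^sub>i \<psi>\<^sub>i\<close> is represented by the countable set of its
  disjuncts \<open>\<psi>\<^sub>i\<close>, each understood under the existential closure of all its variables.\<close>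
definition sigma1_sentence :: "nat list \<Rightarrow> qf set \<Rightarrow> bool" where
  "sigma1_sentence sig \<Phi> \<longleftrightarrow> countable \<Phi> \<and> (\<forall>\<psi>\<in>\<Phi>. wf_qf sig \<psi>)"

definition models_sigma1 :: "struc \<Rightarrow> qf set \<Rightarrow> bool" where
  "models_sigma1 S \<Phi> \<longleftrightarrow> (\<exists>\<psi>\<in>\<Phi>. \<exists>v. sat S v \<psi>)"

definition Th_sigma1 :: "nat list \<Rightarrow> struc \<Rightarrow> qf set set" where
  "Th_sigma1 sig S = {\<Phi>. sigma1_sentence sig \<Phi> \<and> models_sigma1 S \<Phi>}"

definition sigma1_partial_order :: "nat list \<Rightarrow> struc set \<Rightarrow> bool" where
  "sigma1_partial_order sig K \<longleftrightarrow>
     (\<forall>A\<in>K. \<forall>B\<in>K. A \<noteq> B \<longrightarrow> Th_sigma1 sig A \<noteq> Th_sigma1 sig B)"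

definition solid_sigma1_partial_order :: "nat list \<Rightarrow> struc set \<Rightarrow> bool" where
  "solid_sigma1_partial_order sig K \<longleftrightarrow> sigma1_partial_order sig K \<and>
     (\<forall>A\<in>K. Th_sigma1 sig A -
        \<Union>{Th_sigma1 sig B | B. B \<in> K \<and> Th_sigma1 sig B \<subset> Th_sigma1 sig A} \<noteq> {})"

end

theory Submission
  imports Defs "HOL-Library.Infinite_Set"
begin
instance qf :: countable by countable_datatype

fun vars :: "qf \<Rightarrow> nat set" where
  "vars (Eq a b) = {a, b}"
| "vars (Rel i xs) = set xs"
| "vars (Neg p) = vars p"
| "vars (Conj p q) = vars p \<union> vars q"

lemma finite_vars: "finite (vars p)"
  by (induction p) auto

lemma sat_cong: "(\<forall>x\<in>vars p. v x = w x) \<Longrightarrow> sat S v p = sat S w p"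
proof (induction p)
  case (Rel i xs)
  then show ?case by (metis map_eq_conv sat.simps(2) vars.simps(2))
qed auto

lemma sat_bounded:
  assumes "sat S v p"
  shows "\<exists>N. \<forall>k\<ge>N. \<exists>w. (\<forall>x. w x \<le> k) \<and> sat S w p"
proof -
  define N where "N = Max (insert 0 (v ` vars p))"
  have fin: "finite (insert 0 (v ` vars p))" using finite_vars by auto
  { fix k assume k: "k \<ge> N"
    define w where "w = (\<lambda>x. if x \<in> vars p then v x else 0)"
    have "\<forall>x. w x \<le> k"
      using Max_ge[OF fin] k unfolding w_def N_def by fastforce
    moreover have "sat S w p" using assms sat_cong[of p v w] unfolding w_def by auto
    ultimately have "\<exists>w. (\<forall>x. w x \<le> k) \<and> sat S w p" by blast }
  then show ?thesis by blast
qed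

lemma sat_iso: "inj f \<Longrightarrow> (\<forall>i xs. S i xs \<longleftrightarrow> A i (map f xs)) \<Longrightarrow> sat S v p = sat A (f \<circ> v) p"
proof (induction p)
  case (Eq a b) then show ?case by (auto dest: injD)
qed auto

lemma iso_sat1: "iso S A \<Longrightarrow> sat S v p \<Longrightarrow> \<exists>w. sat A w p"
  unfolding iso_def using sat_iso bij_is_inj by blast

lemma iso_sat2: "iso S A \<Longrightarrow> sat A v p \<Longrightarrow> \<exists>w. sat S w p"
proof -
  assume "iso S A" "sat A v p"
  then obtain f where f: "bij f" "\<forall>i xs. S i xs \<longleftrightarrow> A i (map f xs)" unfolding iso_def by blast
  have "f \<circ> (inv f \<circ> v) = v" using f(1) by (auto simp: fun_eq_iff bij_is_surj surj_f_inv_f)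
  then have "sat S (inv f \<circ> v) p" using sat_iso[OF bij_is_inj[OF f(1)] f(2), of "inv f \<circ> v" p] \<open>sat A v p\<close> by simp
  then show ?thesis by blast
qed

lemma sat_restr: "(\<forall>x. v x \<le> n) \<Longrightarrow> sat (snd (restr S n)) v p = sat S v p"
  by (induction p) (auto simp: restr_def)

lemma restr_mono: "restr S m' = restr T m' \<Longrightarrow> m \<le> m' \<Longrightarrow> restr S m = restr T m"
  unfolding restr_def by (auto simp: fun_eq_iff) (metis order_trans atMost_iff subsetD subsetI)+

fun conjs :: "qf list \<Rightarrow> qf" where
  "conjs [] = Eq 0 0"
| "conjs (p # ps) = Conj p (conjs ps)"

lemma sat_conjs: "sat S v (conjs ps) \<longleftrightarrow> (\<forall>p\<in>set ps. sat S v p)"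
  by (induction ps) auto

lemma wf_conjs: "wf_qf sig (conjs ps) \<longleftrightarrow> (\<forall>p\<in>set ps. wf_qf sig p)"
  by (induction ps) auto

definition diag :: "nat list \<Rightarrow> nat \<Rightarrow> struc \<Rightarrow> qf" where
  "diag sig n S = conjs ([Neg (Eq a b). a \<leftarrow> [0..<Suc n], b \<leftarrow> [0..<Suc n], a \<noteq> b] @
     concat (map (\<lambda>i. map (\<lambda>xs. if S i xs then Rel i xs else Neg (Rel i xs))
        (List.n_lists (sig ! i) [0..<Suc n])) [0..<length sig]))"

lemma wf_diag: "wf_qf sig (diag sig n S)"
  unfolding diag_def wf_conjs by (auto simp: set_n_lists)

lemma l1: "(\<forall>p\<in>set [Neg (Eq a b). a \<leftarrow> [0..<Suc n], b \<leftarrow> [0..<Suc n], a \<noteq> b]. sat B w p)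
   \<longleftrightarrow> inj_on w {..n}"
proof -
  have s: "set [Neg (Eq a b). a \<leftarrow> [0..<Suc n], b \<leftarrow> [0..<Suc n], a \<noteq> b] = {Neg (Eq a b) | a b. a \<le> n \<and> b \<le> n \<and> a \<noteq> b}"
    by (auto simp del: upt_Suc)
  show ?thesis unfolding s inj_on_def by force
qed

lemma l2: "(\<forall>p\<in>set (concat (map (\<lambda>i. map (\<lambda>xs. if S i xs then Rel i xs else Neg (Rel i xs))
        (List.n_lists (sig ! i) [0..<Suc n])) [0..<length sig])). sat B w p)
  \<longleftrightarrow> (\<forall>i<length sig. \<forall>xs. length xs = sig ! i \<and> set xs \<subseteq> {..n} \<longrightarrow> (B i (map w xs) \<longleftrightarrow> S i xs))"
proof -
  have e: "set xs \<subseteq> {0..<Suc n} \<longleftrightarrow> set xs \<subseteq> {..n}" for xs :: "nat list"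
    by auto
  have s: "set (concat (map (\<lambda>i. map (\<lambda>xs. if S i xs then Rel i xs else Neg (Rel i xs))
        (List.n_lists (sig ! i) [0..<Suc n])) [0..<length sig])) =
     {if S i xs then Rel i xs else Neg (Rel i xs) | i xs. i < length sig \<and> length xs = sig ! i \<and> set xs \<subseteq> {..n}}"
    by (auto simp: set_n_lists e simp del: upt_Suc) blast+
  show ?thesis
  proof
    assume a: "\<forall>p\<in>set (concat (map (\<lambda>i. map (\<lambda>xs. if S i xs then Rel i xs else Neg (Rel i xs))
        (List.n_lists (sig ! i) [0..<Suc n])) [0..<length sig])). sat B w p"
    show "\<forall>i<length sig. \<forall>xs. length xs = sig ! i \<and> set xs \<subseteq> {..n} \<longrightarrow> (B i (map w xs) \<longleftrightarrow> S i xs)"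
    proof (intro allI impI)
      fix i xs assume "i < length sig" "length xs = sig ! i \<and> set xs \<subseteq> {..n}"
      then have "sat B w (if S i xs then Rel i xs else Neg (Rel i xs))" using a unfolding s by blast
      then show "B i (map w xs) \<longleftrightarrow> S i xs" by (cases "S i xs") auto
    qed
  next
    assume a: "\<forall>i<length sig. \<forall>xs. length xs = sig ! i \<and> set xs \<subseteq> {..n} \<longrightarrow> (B i (map w xs) \<longleftrightarrow> S i xs)"
    show "\<forall>p\<in>set (concat (map (\<lambda>i. map (\<lambda>xs. if S i xs then Rel i xs else Neg (Rel i xs))
        (List.n_lists (sig ! i) [0..<Suc n])) [0..<length sig])). sat B w p"
      unfolding s using a by auto
  qed
qed

lemma sat_diag: "sat B w (diag sig n S) \<longleftrightarrow> inj_on w {..n} \<and>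
   (\<forall>i<length sig. \<forall>xs. length xs = sig ! i \<and> set xs \<subseteq> {..n} \<longrightarrow> (B i (map w xs) \<longleftrightarrow> S i xs))"
  unfolding diag_def sat_conjs set_append ball_Un l1 l2 ..

lemma bij_extend:
  fixes w :: "nat \<Rightarrow> nat"
  assumes "inj_on w {..n}"
  shows "\<exists>f. bij f \<and> (\<forall>x\<le>n. f x = w x)"
proof -
  define F where "F = {..n}"
  define G where "G = w ` F"
  have iF: "infinite (- F)" unfolding F_def by (simp add: Compl_eq_Diff_UNIV infinite_UNIV_nat)
  have iG: "infinite (- G)" unfolding G_def F_def by (simp add: Compl_eq_Diff_UNIV infinite_UNIV_nat)
  have b1: "bij_betw (inv_into UNIV (enumerate (- F))) (- F) UNIV"
    using bij_betw_inv_into[OF bij_enumerate[OF iF]] .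
  have b2: "bij_betw (enumerate (- G) \<circ> inv_into UNIV (enumerate (- F))) (- F) (- G)"
    using bij_betw_trans[OF b1 bij_enumerate[OF iG]] .
  have b3: "bij_betw w F G" unfolding G_def F_def using assms by (simp add: bij_betw_def)
  have "bij_betw (\<lambda>x. if x \<in> F then w x else (enumerate (- G) \<circ> inv_into UNIV (enumerate (- F))) x) (F \<union> - F) (G \<union> - G)"
    by (rule bij_betw_disjoint_Un[OF b3 b2]) auto
  then have "bij (\<lambda>x. if x \<in> F then w x else (enumerate (- G) \<circ> inv_into UNIV (enumerate (- F))) x)" by simp
  then show ?thesis unfolding F_def by (intro exI[of _ "\<lambda>x. if x \<in> {..n} then w x else (enumerate (- G) \<circ> inv_into UNIV (enumerate (- {..n}))) x"]) auto
qed

lemma extend_struc: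
  assumes wS: "wf_struc sig S" and wB: "wf_struc sig B" and sd: "sat B w (diag sig n S)"
  shows "\<exists>T. wf_struc sig T \<and> iso T B \<and> restr T n = restr S n"
proof -
  have inj: "inj_on w {..n}" and rel: "\<forall>i<length sig. \<forall>xs. length xs = sig ! i \<and> set xs \<subseteq> {..n} \<longrightarrow> (B i (map w xs) \<longleftrightarrow> S i xs)"
    using sd unfolding sat_diag by auto
  obtain f where f: "bij f" "\<forall>x\<le>n. f x = w x" using bij_extend[OF inj] by blast
  define T where "T = (\<lambda>i xs. B i (map f xs))"
  have "wf_struc sig T" using wB unfolding wf_struc_def T_def by (metis length_map)
  moreover have "iso T B" unfolding iso_def T_def using f(1) by blast
  moreover have "restr T n = restr S n"
  proof -
    { fix i xs assume xs: "set xs \<subseteq> {..n}"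
      have mf: "map f xs = map w xs" using xs f(2) by (auto intro: map_cong)
      have "T i xs \<longleftrightarrow> S i xs"
      proof (cases "i < length sig \<and> length xs = sig ! i")
        case True
        have "T i xs = B i (map w xs)" unfolding T_def mf ..
        then show ?thesis using rel xs True by auto
      next
        case False
        have "T i xs = B i (map w xs)" unfolding T_def mf ..
        then show ?thesis using wB wS False unfolding wf_struc_def by (metis length_map)
      qed }
    then show ?thesis unfolding restr_def by (auto simp: fun_eq_iff)
  qed
  ultimately show ?thesis by blast
qed

lemma diag_self: "sat S id (diag sig n S)"
  unfolding sat_diag by auto

lemma diag_restr: "restr T n = restr S n \<Longrightarrow> diag sig n T = diag sig n S"
proof -
  assume a: "restr T n = restr S n"
  have h: "xs \<in> set (List.n_lists k [0..<Suc n]) \<Longrightarrow> T i xs = S i xs" for xs k i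
  proof -
    assume "xs \<in> set (List.n_lists k [0..<Suc n])"
    then have "set xs \<subseteq> {..n}" by (auto simp: set_n_lists)
    then show ?thesis using a unfolding restr_def by (auto simp: fun_eq_iff)
  qed
  show ?thesis unfolding diag_def by (simp add: h cong: map_cong if_cong)
qed

lemma Th_iso_sub: "iso S A \<Longrightarrow> Th_sigma1 sig A \<subseteq> Th_sigma1 sig S"
  unfolding Th_sigma1_def models_sigma1_def using iso_sat2 by blast

lemma Th_iso_sub2: "iso S A \<Longrightarrow> Th_sigma1 sig S \<subseteq> Th_sigma1 sig A"
  unfolding Th_sigma1_def models_sigma1_def using iso_sat1 by blast

lemma sing_Th: "sat A v p \<Longrightarrow> wf_qf sig p \<Longrightarrow> {p} \<in> Th_sigma1 sig A"
  unfolding Th_sigma1_def models_sigma1_def sigma1_sentence_def by auto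

lemma sing_Th_D: "{p} \<in> Th_sigma1 sig A \<Longrightarrow> \<exists>v. sat A v p"
  unfolding Th_sigma1_def models_sigma1_def by auto

lemma iso_refl: "iso A A"
  unfolding iso_def by (intro exI[of _ id]) auto

lemma key:
  assumes L: "nUs_learns sig K M" and fam: "family sig K"
    and AK: "A \<in> K" and BK: "B \<in> K" and AB: "A \<noteq> B"
    and wT: "wf_struc sig T" and isoT: "iso T A" and Mm: "M (restr T m) = Some A"
    and sd: "sat B w (diag sig m T)" and ThBA: "Th_sigma1 sig B \<subseteq> Th_sigma1 sig A"
  shows False
proof -
  have wB: "wf_struc sig B" and wA: "wf_struc sig A" using fam AK BK unfolding family_def by auto
  obtain T' where T': "wf_struc sig T'" "iso T' B" "restr T' m = restr T m"
    using extend_struc[OF wT wB sd] by blast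
  have T'LD: "T' \<in> LD sig K" using T' BK unfolding LD_def by auto
  obtain n1 where n1: "\<forall>n\<ge>n1. M (restr T' n) = Some B"
    using L T'LD T'(2) BK unfolding nUs_learns_def by blast
  define m' where "m' = max n1 (Suc m)"
  have Mm': "M (restr T' m') = Some B" using n1 m'_def by auto
  have "{diag sig m' T'} \<in> Th_sigma1 sig T'" using diag_self wf_diag sing_Th by metis
  then have "{diag sig m' T'} \<in> Th_sigma1 sig A" using Th_iso_sub2[OF T'(2)] ThBA by blast
  then obtain w' where "sat A w' (diag sig m' T')" using sing_Th_D by blast
  then obtain T'' where T'': "wf_struc sig T''" "iso T'' A" "restr T'' m' = restr T' m'"
    using extend_struc[OF T'(1) wA] by blast
  have T''LD: "T'' \<in> LD sig K" using T'' AK unfolding LD_def by auto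
  have "restr T'' m = restr T' m" using restr_mono[OF T''(3)] m'_def by auto
  then have M1: "M (restr T'' m) = Some A" using T'(3) Mm by simp
  have M2: "M (restr T'' m') = Some B" using T''(3) Mm' by simp
  define n0 where "n0 = (LEAST n. M (restr T'' n) = Some A)"
  have n0: "M (restr T'' n0) = Some A" "n0 \<le> m" using M1 unfolding n0_def
    by (auto intro: LeastI Least_le)
  have n0': "\<forall>k<n0. M (restr T'' k) \<noteq> Some A" unfolding n0_def using not_less_Least by blast
  have "\<forall>m2>n0. M (restr T'' m2) = Some A"
    using L T''LD T''(2) AK n0 n0' unfolding nUs_learns_def by blast
  then have "M (restr T'' m') = Some A" using n0 m'_def by auto
  then show False using M2 AB by simp
qed

lemma learnable_imp_solid:
  assumes fam: "family sig K" and L: "nUs_learns sig K M"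
  shows "solid_sigma1_partial_order sig K"
proof -
  have ev: "\<exists>m. M (restr A m) = Some A" if "A \<in> K" for A
  proof -
    have "A \<in> LD sig K" using that fam iso_refl unfolding LD_def family_def by auto
    then show ?thesis using L that iso_refl unfolding nUs_learns_def by blast
  qed
  have po: "sigma1_partial_order sig K"
    unfolding sigma1_partial_order_def
  proof (intro ballI impI notI)
    fix A B assume AK: "A \<in> K" and BK: "B \<in> K" and AB: "A \<noteq> B" and eq: "Th_sigma1 sig A = Th_sigma1 sig B"
    obtain m where m: "M (restr A m) = Some A" using ev AK by blast
    have "{diag sig m A} \<in> Th_sigma1 sig A" using diag_self wf_diag sing_Th by metis
    then obtain w where "sat B w (diag sig m A)" using eq sing_Th_D by metis
    moreover have "wf_struc sig A" using fam AK unfolding family_def by auto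
    ultimately show False using key[OF L fam AK BK AB _ iso_refl m] eq by blast
  qed
  have "Th_sigma1 sig A - \<Union>{Th_sigma1 sig B | B. B \<in> K \<and> Th_sigma1 sig B \<subset> Th_sigma1 sig A} \<noteq> {}"
    if AK: "A \<in> K" for A
  proof -
    define Phi where "Phi = {diag sig m T | T m. wf_struc sig T \<and> iso T A \<and> M (restr T m) = Some A}"
    obtain m where m: "M (restr A m) = Some A" using ev AK by blast
    have wA: "wf_struc sig A" using fam AK unfolding family_def by auto
    have "diag sig m A \<in> Phi" unfolding Phi_def using wA iso_refl m by blast
    then have PhiA: "Phi \<in> Th_sigma1 sig A"
      unfolding Th_sigma1_def sigma1_sentence_def models_sigma1_def
      using wf_diag diag_self unfolding Phi_def by blast
    have "Phi \<notin> Th_sigma1 sig B" if BK: "B \<in> K" and sub: "Th_sigma1 sig B \<subset> Th_sigma1 sig A" for B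
    proof
      assume "Phi \<in> Th_sigma1 sig B"
      then obtain T m' w where T: "wf_struc sig T" "iso T A" "M (restr T m') = Some A"
        and s: "sat B w (diag sig m' T)"
        unfolding Th_sigma1_def models_sigma1_def Phi_def by blast
      have "A \<noteq> B" using sub by blast
      then show False using key[OF L fam AK BK _ T s] sub by blast
    qed
    then show ?thesis using PhiA by blast
  qed
  then show ?thesis using po unfolding solid_sigma1_partial_order_def by blast
qed

definition wit :: "nat \<Rightarrow> struc \<Rightarrow> qf set \<Rightarrow> bool" where
  "wit k R \<Phi> \<longleftrightarrow> (\<exists>\<psi>\<in>\<Phi>. \<exists>v. (\<forall>x. v x \<le> k) \<and> sat R v \<psi>)"

definition agec :: "nat \<Rightarrow> struc \<Rightarrow> struc \<Rightarrow> bool" where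
  "agec k R B \<longleftrightarrow> (\<forall>\<psi> v. (\<forall>x. v x \<le> k) \<and> sat R v \<psi> \<longrightarrow> (\<exists>w. sat B w \<psi>))"

definition cand :: "struc set \<Rightarrow> (struc \<Rightarrow> qf set) \<Rightarrow> nat \<Rightarrow> struc \<Rightarrow> struc \<Rightarrow> bool" where
  "cand K phi k R B \<longleftrightarrow> B \<in> K \<and> wit k R (phi B) \<and> agec k R B"

definition pick :: "struc set \<Rightarrow> (struc \<Rightarrow> qf set) \<Rightarrow> (struc \<Rightarrow> nat) \<Rightarrow> nat \<Rightarrow> struc \<Rightarrow> struc option" where
  "pick K phi idx k R = (if \<exists>B. cand K phi k R B then
      Some (SOME B. cand K phi k R B \<and> (\<forall>C. cand K phi k R C \<longrightarrow> idx B \<le> idx C)) else None)"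

primrec out :: "struc set \<Rightarrow> (struc \<Rightarrow> qf set) \<Rightarrow> (struc \<Rightarrow> nat) \<Rightarrow> struc \<Rightarrow> nat \<Rightarrow> struc option" where
  "out K phi idx R 0 = pick K phi idx 0 R"
| "out K phi idx R (Suc n) = (case out K phi idx R n of
      Some B \<Rightarrow> if cand K phi (Suc n) R B then Some B else pick K phi idx (Suc n) R
    | None \<Rightarrow> pick K phi idx (Suc n) R)"

lemma pick_min:
  assumes "cand K phi k R C"
  shows "\<exists>B. pick K phi idx k R = Some B \<and> cand K phi k R B \<and> idx B \<le> idx C"
proof -
  have ex: "\<exists>B. cand K phi k R B \<and> (\<forall>C. cand K phi k R C \<longrightarrow> idx B \<le> idx C)"
    using ex_has_least_nat[of "cand K phi k R" C idx] assms by blast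
  show ?thesis using someI_ex[OF ex] assms unfolding pick_def by auto
qed

lemma pick_cand: "pick K phi idx k R = Some B \<Longrightarrow> cand K phi k R B"
  by (metis option.distinct(1) option.inject pick_def pick_min)

lemma out_cand: "out K phi idx R n = Some B \<Longrightarrow> cand K phi n R B"
  by (induction n arbitrary: B) (auto simp: pick_cand split: option.splits if_splits)

lemma pick_cong: "(\<forall>B. cand K phi k R B = cand K phi k T B) \<Longrightarrow> pick K phi idx k R = pick K phi idx k T"
proof -
  assume "\<forall>B. cand K phi k R B = cand K phi k T B"
  then have "cand K phi k R = cand K phi k T" by auto
  then show ?thesis unfolding pick_def by simp
qed

lemma out_cong: "(\<forall>k\<le>n. \<forall>B. cand K phi k R B = cand K phi k T B) \<Longrightarrow> out K phi idx R n = out K phi idx T n"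
proof (induction n)
  case 0 then show ?case using pick_cong by simp
next
  case (Suc n)
  then have "out K phi idx R n = out K phi idx T n" by simp
  moreover have "pick K phi idx (Suc n) R = pick K phi idx (Suc n) T" using Suc.prems pick_cong by blast
  ultimately show ?case using Suc.prems by (simp split: option.splits)
qed

lemma cand_restr: "k \<le> n \<Longrightarrow> cand K phi k (snd (restr S n)) B = cand K phi k S B"
proof -
  assume kn: "k \<le> n"
  have h: "((\<forall>x. v x \<le> k) \<and> sat (snd (restr S n)) v \<psi>) = ((\<forall>x. v x \<le> k) \<and> sat S v \<psi>)" for v \<psi>
    using sat_restr[of v n S \<psi>] kn order_trans by blast
  show ?thesis unfolding cand_def wit_def agec_def by (simp only: h)
qed

lemma out_restr: "out K phi idx (snd (restr S n)) n = out K phi idx S n"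
  using out_cong cand_restr by blast

lemma agec_iso: "iso S A \<Longrightarrow> agec k S A"
  unfolding agec_def using iso_sat1 by blast

lemma wit_mono: "wit k S \<Phi> \<Longrightarrow> k \<le> k' \<Longrightarrow> wit k' S \<Phi>"
  unfolding wit_def using order_trans by blast

lemma wit_ev:
  assumes "iso S A" "\<Phi> \<in> Th_sigma1 sig A"
  shows "\<exists>N. \<forall>k\<ge>N. wit k S \<Phi>"
proof -
  obtain \<psi> v where "\<psi> \<in> \<Phi>" "sat A v \<psi>" using assms(2) unfolding Th_sigma1_def models_sigma1_def by blast
  then obtain v' where "sat S v' \<psi>" using iso_sat2 assms(1) by blast
  then obtain N where "\<forall>k\<ge>N. \<exists>w. (\<forall>x. w x \<le> k) \<and> sat S w \<psi>" using sat_bounded by blast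
  then show ?thesis using \<open>\<psi> \<in> \<Phi>\<close> unfolding wit_def by blast
qed

definition good_phi where
  "good_phi sig K phi \<longleftrightarrow> (\<forall>A\<in>K. phi A \<in> Th_sigma1 sig A \<and>
      (\<forall>B\<in>K. Th_sigma1 sig B \<subset> Th_sigma1 sig A \<longrightarrow> phi A \<notin> Th_sigma1 sig B))"

lemma freq:
  assumes gp: "good_phi sig K phi" and po: "sigma1_partial_order sig K"
    and isoS: "iso S A" and AK: "A \<in> K" and BK: "B \<in> K"
    and fr: "\<forall>N. \<exists>n\<ge>N. cand K phi n S B"
  shows "B = A"
proof -
  have pB: "phi B \<in> Th_sigma1 sig B" using gp BK unfolding good_phi_def by blast
  obtain n where "cand K phi n S B" using fr by blast
  then obtain \<psi> v where \<psi>: "\<psi> \<in> phi B" "sat S v \<psi>" unfolding cand_def wit_def by blast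
  then obtain w where "sat A w \<psi>" using iso_sat1 isoS by blast
  then have inA: "phi B \<in> Th_sigma1 sig A" using pB \<psi>(1)
    unfolding Th_sigma1_def models_sigma1_def by blast
  have sub: "Th_sigma1 sig A \<subseteq> Th_sigma1 sig B"
  proof
    fix \<Phi> assume "\<Phi> \<in> Th_sigma1 sig A"
    then obtain \<chi> u where \<chi>: "\<chi> \<in> \<Phi>" "sat A u \<chi>" "sigma1_sentence sig \<Phi>"
      unfolding Th_sigma1_def models_sigma1_def by blast
    then obtain u' where "sat S u' \<chi>" using iso_sat2 isoS by blast
    then obtain N where N: "\<forall>k\<ge>N. \<exists>w. (\<forall>x. w x \<le> k) \<and> sat S w \<chi>" using sat_bounded by blast
    obtain n where n: "n \<ge> N" "cand K phi n S B" using fr by blast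
    then obtain w where "(\<forall>x. w x \<le> n)" "sat S w \<chi>" using N by blast
    then obtain w' where "sat B w' \<chi>" using n(2) unfolding cand_def agec_def by blast
    then show "\<Phi> \<in> Th_sigma1 sig B" using \<chi> unfolding Th_sigma1_def models_sigma1_def by blast
  qed
  have "\<not> Th_sigma1 sig A \<subset> Th_sigma1 sig B" using gp BK AK inA unfolding good_phi_def by blast
  then have "Th_sigma1 sig A = Th_sigma1 sig B" using sub by blast
  then show ?thesis using po AK BK unfolding sigma1_partial_order_def by metis
qed

lemma stay:
  assumes isoS: "iso S A" and o: "out K phi idx S n = Some A"
  shows "m \<ge> n \<Longrightarrow> out K phi idx S m = Some A"
proof (induction m rule: dec_induct)
  case base then show ?case using o .
next
  case (step m)
  have c: "cand K phi n S A" using out_cand o by blast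
  then have "cand K phi (Suc m) S A" using step wit_mono agec_iso isoS unfolding cand_def
    by (meson le_SucI)
  then show ?case using step by simp
qed

lemma finite_ev:
  "finite F \<Longrightarrow> (\<forall>B\<in>F. \<exists>N. \<forall>n\<ge>N. P B n) \<Longrightarrow> \<exists>N::nat. \<forall>B\<in>F. \<forall>n\<ge>N. P B n"
proof (induction F rule: finite_induct)
  case empty then show ?case by simp
next
  case (insert x F)
  then obtain N1 where N1: "\<forall>B\<in>F. \<forall>n\<ge>N1. P B n" by auto
  obtain N2 where N2: "\<forall>n\<ge>N2. P x n" using insert.prems by auto
  show ?case using N1 N2 by (intro exI[of _ "max N1 N2"]) auto
qed

lemma eventually_out:
  assumes gp: "good_phi sig K phi" and po: "sigma1_partial_order sig K"
    and isoS: "iso S A" and AK: "A \<in> K" and inj: "inj_on idx K"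
  shows "\<exists>n. out K phi idx S n = Some A"
proof (rule ccontr)
  assume nA: "\<not> (\<exists>n. out K phi idx S n = Some A)"
  have "phi A \<in> Th_sigma1 sig A" using gp AK unfolding good_phi_def by blast
  then obtain N1 where N1: "\<forall>k\<ge>N1. cand K phi k S A"
    using wit_ev[OF isoS] agec_iso[OF isoS] AK unfolding cand_def by blast
  define F where "F = {B\<in>K. idx B < idx A}"
  have finF: "finite F"
  proof -
    have "inj_on idx F" using inj unfolding F_def by (auto intro: inj_on_subset)
    moreover have "idx ` F \<subseteq> {..<idx A}" unfolding F_def by auto
    ultimately show ?thesis using finite_imageD finite_subset by blast
  qed
  have "\<forall>B\<in>F. \<exists>N. \<forall>n\<ge>N. \<not> cand K phi n S B"
  proof
    fix B assume "B \<in> F"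
    then have BK: "B \<in> K" and "B \<noteq> A" unfolding F_def by auto
    then have "\<not> (\<forall>N. \<exists>n\<ge>N. cand K phi n S B)" using freq[OF gp po isoS AK BK] by blast
    then show "\<exists>N. \<forall>n\<ge>N. \<not> cand K phi n S B" by auto
  qed
  then have "\<exists>N. \<forall>B\<in>F. \<forall>n\<ge>N. \<not> cand K phi n S B" by (rule finite_ev[OF finF, of "\<lambda>B n. \<not> cand K phi n S B"])
  then obtain N2 where N2: "\<forall>B\<in>F. \<forall>n\<ge>N2. \<not> cand K phi n S B" by blast
  define N where "N = max N1 N2"
  have pk: "pick K phi idx n S = Some A" if "n \<ge> N" for n
  proof -
    have "cand K phi n S A" using N1 that unfolding N_def by simp
    then obtain B where B: "pick K phi idx n S = Some B" "cand K phi n S B" "idx B \<le> idx A"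
      using pick_min[of K phi n S A idx] by blast
    have BK: "B \<in> K" using B(2) unfolding cand_def by blast
    have "n \<ge> N2" using that unfolding N_def by simp
    then have "B \<notin> F" using N2 B(2) by blast
    then have "idx B = idx A" using B(3) BK unfolding F_def by auto
    then have "B = A" using inj BK AK by (auto dest: inj_onD)
    then show ?thesis using B by simp
  qed
  have stepk: "out K phi idx S (Suc n) = out K phi idx S n \<and> (\<exists>B. out K phi idx S n = Some B \<and> cand K phi (Suc n) S B)"
    if "n \<ge> N" for n
  proof (cases "out K phi idx S n")
    case None
    have "Suc n \<ge> N" using that by simp
    then have "out K phi idx S (Suc n) = Some A" using None pk[of "Suc n"] by simp
    then show ?thesis using nA by blast
  next
    case (Some B)
    show ?thesis
    proof (cases "cand K phi (Suc n) S B")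
      case True then show ?thesis using Some by simp
    next
      case False
      have "Suc n \<ge> N" using that by simp
      then have "out K phi idx S (Suc n) = Some A" using Some False pk[of "Suc n"] by simp
      then show ?thesis using nA by blast
    qed
  qed
  obtain B where B: "out K phi idx S N = Some B" using stepk[of N] by auto
  have allB: "n \<ge> N \<Longrightarrow> out K phi idx S n = Some B" for n
  proof (induction n rule: dec_induct)
    case base then show ?case using B .
  next
    case (step m) then show ?case using stepk[of m] by simp
  qed
  have "\<forall>M. \<exists>n\<ge>M. cand K phi n S B"
  proof
    fix M
    have "out K phi idx S (max M N) = Some B" using allB by simp
    then show "\<exists>n\<ge>M. cand K phi n S B" using out_cand by (intro exI[of _ "max M N"]) auto
  qed
  moreover have BK: "B \<in> K" using out_cand[OF B] unfolding cand_def by blast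
  ultimately have "B = A" using freq[OF gp po isoS AK] by blast
  then show False using B nA by blast
qed

lemma solid_imp_learnable:
  assumes fam: "family sig K" and sol: "solid_sigma1_partial_order sig K"
  shows "nUs_learnable sig K"
proof -
  have po: "sigma1_partial_order sig K" using sol unfolding solid_sigma1_partial_order_def by blast
  define phi where "phi A = (SOME \<Phi>. \<Phi> \<in> Th_sigma1 sig A - \<Union>{Th_sigma1 sig B | B. B \<in> K \<and> Th_sigma1 sig B \<subset> Th_sigma1 sig A})" for A
  have gp: "good_phi sig K phi" unfolding good_phi_def
  proof
    fix A assume "A \<in> K"
    then have "\<exists>\<Phi>. \<Phi> \<in> Th_sigma1 sig A - \<Union>{Th_sigma1 sig B | B. B \<in> K \<and> Th_sigma1 sig B \<subset> Th_sigma1 sig A}"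
      using sol unfolding solid_sigma1_partial_order_def by blast
    from someI_ex[OF this] show "phi A \<in> Th_sigma1 sig A \<and>
      (\<forall>B\<in>K. Th_sigma1 sig B \<subset> Th_sigma1 sig A \<longrightarrow> phi A \<notin> Th_sigma1 sig B)"
      unfolding phi_def by blast
  qed
  define idx where "idx = to_nat_on K"
  have inj: "inj_on idx K" using fam unfolding idx_def family_def by auto
  define M where "M = (\<lambda>(n, R). out K phi idx R n)"
  have Mr: "M (restr S n) = out K phi idx S n" for S n
    unfolding M_def using out_restr[of K phi idx S n] by (simp add: restr_def)
  have "nUs_learns sig K M"
    unfolding nUs_learns_def
  proof (intro conjI ballI allI impI)
    fix S s assume "S \<in> LD sig K"
    show "M (restr S s) = None \<or> (\<exists>A\<in>K. M (restr S s) = Some A)"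
      unfolding Mr using out_cand unfolding cand_def by (cases "out K phi idx S s") auto
  next
    fix S A assume "S \<in> LD sig K" "A \<in> K" "iso S A"
    then obtain n where "out K phi idx S n = Some A" using eventually_out[OF gp po _ _ inj] by blast
    then show "\<exists>n0. \<forall>n\<ge>n0. M (restr S n) = Some A" unfolding Mr using stay[OF \<open>iso S A\<close>] by blast
  next
    fix S A n0 m assume "S \<in> LD sig K" "A \<in> K" "iso S A"
      "M (restr S n0) = Some A \<and> (\<forall>k<n0. M (restr S k) \<noteq> Some A)" "n0 < m"
    then show "M (restr S m) = Some A" unfolding Mr using stay[OF \<open>iso S A\<close>] by auto
  qed
  then show ?thesis unfolding nUs_learnable_def by blast
qed

theorem mainTheorem11:
  fixes sig :: "nat list" and K :: "struc set"
  assumes "family sig K"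
  shows "nUs_learnable sig K \<longleftrightarrow> solid_sigma1_partial_order sig K"
proof
  assume "nUs_learnable sig K"
  then obtain M where "nUs_learns sig K M" unfolding nUs_learnable_def by blast
  then show "solid_sigma1_partial_order sig K" by (rule learnable_imp_solid[OF assms])
next
  assume "solid_sigma1_partial_order sig K"
  then show "nUs_learnable sig K" by (rule solid_imp_learnable[OF assms])
qed

end
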